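(* For every integer $n \geq 1$, the number of three-candidate ballot sequences of length $n$ with matching parity equals the $n$-th Riordan number $R(n)$.
   Context: A three-candidate ballot sequence of length $n$ is a word $b_1\cdots b_n$ with $b_i\in\{A,B,C\}$ such that in every prefix $b_1\cdots b_k$ ($1\le k\le n$) the number of $A$'s is at least the number of $B$'s, which is at least the number of $C$'s. It has matching parity if the numbers of $A$'s, $B$'s and $C$'s in the whole word are all congruent modulo $2$. $R(n)$ is the number of Riordan paths of length $n$: lattice paths from $(0,0)$ to $(n,0)$ with steps $U=(1,1)$, $F=(1,0)$, $D=(1,-1)$ that never go below the $x$-axis and have no flat step $F$ on the $x$-axis. *)

theory Defs
  imports Main
begin

datatype cand = A | B | C

definition cnt :: "cand \<Rightarrow> cand list \<Rightarrow> nat" where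
  "cnt c w = length (filter (\<lambda>x. x = c) w)"

definition ballot3 :: "cand list \<Rightarrow> bool" where
  "ballot3 w \<longleftrightarrow> (\<forall>k\<in>{1..length w}.
      cnt B (take k w) \<le> cnt A (take k w) \<and> cnt C (take k w) \<le> cnt B (take k w))"

definition matching_parity :: "cand list \<Rightarrow> bool" where
  "matching_parity w \<longleftrightarrow> cnt A w mod 2 = cnt B w mod 2 \<and> cnt B w mod 2 = cnt C w mod 2"

datatype step = U | F | D

fun stepval :: "step \<Rightarrow> int" where
  "stepval U = 1" | "stepval F = 0" | "stepval D = -1"

definition height :: "step list \<Rightarrow> nat \<Rightarrow> int" where
  "height p k = sum_list (map stepval (take k p))"

definition riordan_path :: "step list \<Rightarrow> bool" where
  "riordan_path p \<longleftrightarrow> height p (length p) = 0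
     \<and> (\<forall>k\<le>length p. height p k \<ge> 0)
     \<and> (\<forall>i<length p. p ! i = F \<longrightarrow> height p i \<noteq> 0)"

definition riordan :: "nat \<Rightarrow> nat" where
  "riordan n = card {p. length p = n \<and> riordan_path p}"

end

theory Submission
  imports Defs
begin

lemma UNIV_cand: "(UNIV :: cand set) = {A, B, C}"
proof -
  have "x \<in> {A, B, C}" for x :: cand by (cases x) auto
  then show ?thesis by blast
qed

lemma UNIV_step: "(UNIV :: step set) = {U, F, D}"
proof -
  have "x \<in> {U, F, D}" for x :: step by (cases x) auto
  then show ?thesis by blast
qed

lemma sum_snoc_step:
  fixes P :: "'a list \<Rightarrow> bool" and f :: "'a list \<Rightarrow> nat"
  assumes fin: "finite (UNIV::'a set)" and pc: "\<And>w l. P (w@[l]) \<Longrightarrow> P w"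
  shows "(\<Sum>w\<in>{w. length w = Suc n \<and> P w}. f w) =
         (\<Sum>w\<in>{w. length w = n \<and> P w}. \<Sum>l\<in>UNIV. if P (w@[l]) then f (w@[l]) else 0)"
proof -
  let ?X = "{w. length w = n \<and> P w}"
  let ?Y = "{wl \<in> ?X \<times> UNIV. P (fst wl @ [snd wl])}"
  have finX: "finite ?X"
    by (rule finite_subset[OF _ finite_lists_length_eq[OF fin, of n]]) auto
  have fin2: "finite (?X \<times> (UNIV::'a set))" using finX fin by simp
  have "(\<Sum>w\<in>?X. \<Sum>l\<in>UNIV. if P (w@[l]) then f (w@[l]) else 0)
      = (\<Sum>wl\<in>?X \<times> UNIV. if P (fst wl @ [snd wl]) then f (fst wl @ [snd wl]) else 0)"
    by (simp add: sum.cartesian_product case_prod_beta)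
  also have "\<dots> = (\<Sum>wl\<in>?Y. f (fst wl @ [snd wl]))"
    using sum.inter_filter[OF fin2, of "\<lambda>wl. f (fst wl @ [snd wl])" "\<lambda>wl. P (fst wl @ [snd wl])"]
    by simp
  also have "\<dots> = (\<Sum>v\<in>(\<lambda>wl. fst wl @ [snd wl]) ` ?Y. f v)"
    by (subst sum.reindex) (auto simp: inj_on_def)
  also have "(\<lambda>wl. fst wl @ [snd wl]) ` ?Y = {w. length w = Suc n \<and> P w}"
  proof
    show "(\<lambda>wl. fst wl @ [snd wl]) ` ?Y \<subseteq> {w. length w = Suc n \<and> P w}" using pc by auto
    show "{w. length w = Suc n \<and> P w} \<subseteq> (\<lambda>wl. fst wl @ [snd wl]) ` ?Y"
    proof
      fix v assume v: "v \<in> {w. length w = Suc n \<and> P w}"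
      then have "v \<noteq> []" by auto
      then have e: "v = butlast v @ [last v]" by simp
      have "P (butlast v)" using pc[of "butlast v" "last v"] v e by auto
      with v e have "(butlast v, last v) \<in> ?Y" by auto
      then show "v \<in> (\<lambda>wl. fst wl @ [snd wl]) ` ?Y" using e by force
    qed
  qed
  finally show ?thesis by simp
qed

lemma cnt_snoc: "cnt c (w @ [l]) = cnt c w + (if l = c then 1 else 0)"
  by (simp add: cnt_def)

lemma cnt_Nil: "cnt c [] = 0" by (simp add: cnt_def)

lemma ballot3_snoc:
  "ballot3 (w @ [l]) \<longleftrightarrow> ballot3 w \<and> cnt B (w@[l]) \<le> cnt A (w@[l]) \<and> cnt C (w@[l]) \<le> cnt B (w@[l])"
proof -
  have tk: "take k (w @ [l]) = take k w" if "k \<le> length w" for k using that by simp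
  have "{1..length (w @ [l])} = insert (Suc (length w)) {1..length w}" by auto
  then show ?thesis unfolding ballot3_def using tk by auto
qed

lemma ballot3_counts: "ballot3 w \<Longrightarrow> cnt B w \<le> cnt A w \<and> cnt C w \<le> cnt B w"
proof (cases "w = []")
  case True then show ?thesis by (simp add: cnt_Nil)
next
  case False
  assume "ballot3 w"
  then have "cnt B (take (length w) w) \<le> cnt A (take (length w) w) \<and> cnt C (take (length w) w) \<le> cnt B (take (length w) w)"
  proof -
    have "length w \<in> {1..length w}" using False by (cases w) auto
    then show ?thesis using \<open>ballot3 w\<close> unfolding ballot3_def by blast
  qed
  then show ?thesis by simp
qed

lemma ballot3_prefix: "ballot3 (w @ [l]) \<Longrightarrow> ballot3 w" using ballot3_snoc by blast

definition xa :: "cand list \<Rightarrow> nat" where "xa w = cnt A w - cnt B w"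
definition yb :: "cand list \<Rightarrow> nat" where "yb w = cnt B w - cnt C w"

definition SS :: "(nat \<Rightarrow> nat \<Rightarrow> nat) \<Rightarrow> nat \<Rightarrow> nat" where
  "SS \<phi> n = (\<Sum>w\<in>{w. length w = n \<and> ballot3 w}. \<phi> (xa w) (yb w))"

lemma SS_Suc:
  "SS \<phi> (Suc n) = SS (\<lambda>x y. \<phi> (Suc x) y + (if x > 0 then \<phi> (x - 1) (Suc y) else 0)
                        + (if y > 0 then \<phi> x (y - 1) else 0)) n"
proof -
  have fin: "finite (UNIV :: cand set)" by (simp add: UNIV_cand)
  have "SS \<phi> (Suc n) = (\<Sum>w\<in>{w. length w = n \<and> ballot3 w}. \<Sum>l\<in>UNIV.
           if ballot3 (w@[l]) then \<phi> (xa (w@[l])) (yb (w@[l])) else 0)"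
    unfolding SS_def by (rule sum_snoc_step[OF fin ballot3_prefix])
  also have "\<dots> = SS (\<lambda>x y. \<phi> (Suc x) y + (if x > 0 then \<phi> (x - 1) (Suc y) else 0)
                        + (if y > 0 then \<phi> x (y - 1) else 0)) n"
    unfolding SS_def
  proof (rule sum.cong[OF refl])
    fix w assume "w \<in> {w. length w = n \<and> ballot3 w}"
    then have bw: "ballot3 w" by simp
    have c: "cnt B w \<le> cnt A w" "cnt C w \<le> cnt B w" using ballot3_counts[OF bw] by auto
    show "(\<Sum>l\<in>UNIV. if ballot3 (w@[l]) then \<phi> (xa (w@[l])) (yb (w@[l])) else 0) =
          \<phi> (Suc (xa w)) (yb w) + (if xa w > 0 then \<phi> (xa w - 1) (Suc (yb w)) else 0)
                        + (if yb w > 0 then \<phi> (xa w) (yb w - 1) else 0)"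
      unfolding UNIV_cand using c bw
      by (simp add: ballot3_snoc cnt_snoc xa_def yb_def Suc_diff_le)
  qed
  finally show ?thesis .
qed


definition okp :: "step list \<Rightarrow> bool" where
  "okp p \<longleftrightarrow> (\<forall>k\<le>length p. height p k \<ge> 0) \<and> (\<forall>i<length p. p ! i = F \<longrightarrow> height p i \<noteq> 0)"

definition hgt :: "step list \<Rightarrow> int" where "hgt p = height p (length p)"

lemma height_snoc_le: "k \<le> length p \<Longrightarrow> height (p @ [s]) k = height p k"
  by (simp add: height_def)

lemma height_snoc_end: "height (p @ [s]) (Suc (length p)) = hgt p + stepval s"
  by (simp add: height_def hgt_def)

lemma okp_snoc: "okp (p @ [s]) \<longleftrightarrow> okp p \<and> hgt p + stepval s \<ge> 0 \<and> (s = F \<longrightarrow> hgt p \<noteq> 0)"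
proof -
  have k: "(\<forall>k\<le>length (p@[s]). height (p@[s]) k \<ge> 0) \<longleftrightarrow>
           (\<forall>k\<le>length p. height p k \<ge> 0) \<and> hgt p + stepval s \<ge> 0"
    using height_snoc_le height_snoc_end by (auto simp: le_Suc_eq)
  have i: "(\<forall>i<length (p@[s]). (p@[s]) ! i = F \<longrightarrow> height (p@[s]) i \<noteq> 0) \<longleftrightarrow>
           (\<forall>i<length p. p ! i = F \<longrightarrow> height p i \<noteq> 0) \<and> (s = F \<longrightarrow> hgt p \<noteq> 0)"
    using height_snoc_le[of _ p s] by (auto simp: less_Suc_eq nth_append hgt_def)
  show ?thesis unfolding okp_def using k i by blast
qed

lemma okp_hgt: "okp p \<Longrightarrow> hgt p \<ge> 0"
  by (simp add: okp_def hgt_def)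

lemma okp_prefix: "okp (p @ [s]) \<Longrightarrow> okp p" using okp_snoc by blast

definition QQ :: "(int \<Rightarrow> nat) \<Rightarrow> nat \<Rightarrow> nat" where
  "QQ \<psi> n = (\<Sum>p\<in>{p. length p = n \<and> okp p}. \<psi> (hgt p))"

lemma QQ_Suc:
  "QQ \<psi> (Suc n) = QQ (\<lambda>g. \<psi> (g + 1) + (if g \<noteq> 0 then \<psi> g else 0) + (if g \<ge> 1 then \<psi> (g - 1) else 0)) n"
proof -
  have fin: "finite (UNIV :: step set)" by (simp add: UNIV_step)
  have "QQ \<psi> (Suc n) = (\<Sum>p\<in>{p. length p = n \<and> okp p}. \<Sum>s\<in>UNIV.
           if okp (p@[s]) then \<psi> (hgt (p@[s])) else 0)"
    unfolding QQ_def by (rule sum_snoc_step[OF fin okp_prefix])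
  also have "\<dots> = QQ (\<lambda>g. \<psi> (g + 1) + (if g \<noteq> 0 then \<psi> g else 0) + (if g \<ge> 1 then \<psi> (g - 1) else 0)) n"
    unfolding QQ_def
  proof (rule sum.cong[OF refl])
    fix p assume "p \<in> {p. length p = n \<and> okp p}"
    then have op: "okp p" by simp
    have g: "hgt p \<ge> 0" using okp_hgt[OF op] .
    have hs: "hgt (p @ [s]) = hgt p + stepval s" for s
      using height_snoc_end[of p s] by (simp add: hgt_def)
    show "(\<Sum>s\<in>UNIV. if okp (p@[s]) then \<psi> (hgt (p@[s])) else 0) =
          \<psi> (hgt p + 1) + (if hgt p \<noteq> 0 then \<psi> (hgt p) else 0) + (if hgt p \<ge> 1 then \<psi> (hgt p - 1) else 0)"
      unfolding UNIV_step using op g by (simp add: okp_snoc hs)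
  qed
  finally show ?thesis .
qed

definition alpha :: "nat \<Rightarrow> nat \<Rightarrow> nat \<Rightarrow> nat" where
  "alpha h x y = Suc (min x h) - (h - y)"

lemma alpha_step:
  "alpha h (Suc x) y + (if x > 0 then alpha h (x - 1) (Suc y) else 0) + (if y > 0 then alpha h x (y - 1) else 0)
   = (if h > 0 then alpha (h - 1) x y else 0) + alpha h x y + alpha (Suc h) x y"
proof (cases h)
  case 0 then show ?thesis by (simp add: alpha_def)
next
  case (Suc k)
  show ?thesis
  proof (cases x)
    case 0
    then show ?thesis using Suc unfolding alpha_def
      by (cases y) (simp_all add: min_def split: nat_diff_split)
  next
    case (Suc x')
    then show ?thesis using \<open>h = Suc k\<close> unfolding alpha_def
      by (cases y) (simp_all add: min_def split: nat_diff_split)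
  qed
qed

definition psi :: "nat \<Rightarrow> int \<Rightarrow> nat" where
  "psi h g = (if g = int h then 1 else 0) + (if g = int h + 1 then 1 else 0)"

lemma psi_step:
  assumes "g \<ge> 0"
  shows "psi h (g + 1) + (if g \<noteq> 0 then psi h g else 0) + (if g \<ge> 1 then psi h (g - 1) else 0)
       = (if h > 0 then psi (h - 1) g else 0) + psi h g + psi (Suc h) g"
  using assms by (cases h) (auto simp: psi_def)

lemma SS_add: "SS (\<lambda>x y. f x y + g x y) n = SS f n + SS g n"
  by (simp add: SS_def sum.distrib)

lemma QQ_add: "QQ (\<lambda>x. f x + g x) n = QQ f n + QQ g n"
  by (simp add: QQ_def sum.distrib)

lemma SS_zero: "SS (\<lambda>x y. 0) n = 0" by (simp add: SS_def)
lemma QQ_zero: "QQ (\<lambda>x. 0) n = 0" by (simp add: QQ_def)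

lemma SS_0: "SS \<phi> 0 = \<phi> 0 0"
proof -
  have "{w. length w = 0 \<and> ballot3 w} = {[]}" by (auto simp: ballot3_def)
  then show ?thesis by (simp add: SS_def xa_def yb_def cnt_Nil)
qed

lemma QQ_0: "QQ \<psi> 0 = \<psi> 0"
proof -
  have "{p. length p = 0 \<and> okp p} = {[]}" by (auto simp: okp_def height_def)
  then show ?thesis by (simp add: QQ_def hgt_def height_def)
qed

lemma QQ_cong: "(\<And>g. g \<ge> 0 \<Longrightarrow> f g = f' g) \<Longrightarrow> QQ f n = QQ f' n"
  unfolding QQ_def by (rule sum.cong[OF refl]) (simp add: okp_hgt)

lemma SS_cong: "(\<And>x y. f x y = f' x y) \<Longrightarrow> SS f n = SS f' n"
  by (simp add: SS_def)

lemma main_alpha: "SS (alpha h) n = QQ (psi h) n"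
proof (induction n arbitrary: h)
  case 0
  show ?case by (simp add: SS_0 QQ_0 alpha_def psi_def)
next
  case (Suc n)
  have "SS (alpha h) (Suc n) = SS (\<lambda>x y. (if h > 0 then alpha (h - 1) x y else 0) + alpha h x y + alpha (Suc h) x y) n"
    by (simp add: SS_Suc alpha_step)
  also have "\<dots> = (if h > 0 then SS (alpha (h - 1)) n else 0) + SS (alpha h) n + SS (alpha (Suc h)) n"
    by (cases "h > 0") (simp_all add: SS_add SS_zero)
  also have "\<dots> = (if h > 0 then QQ (psi (h - 1)) n else 0) + QQ (psi h) n + QQ (psi (Suc h)) n"
    using Suc.IH by simp
  also have "\<dots> = QQ (\<lambda>g. (if h > 0 then psi (h - 1) g else 0) + psi h g + psi (Suc h) g) n"
    by (cases "h > 0") (simp_all add: QQ_add QQ_zero)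
  also have "\<dots> = QQ (psi h) (Suc n)"
    by (simp add: QQ_Suc) (rule QQ_cong, simp add: psi_step)
  finally show ?case .
qed


definition beta0 :: "nat \<Rightarrow> nat \<Rightarrow> nat" where
  "beta0 x y = (if even x \<and> even y then 1 else 0)"

lemma beta0_step: "beta0 (Suc x) y + (if x > 0 then beta0 (x - 1) (Suc y) else 0) + (if y > 0 then beta0 x (y - 1) else 0) = 1 - beta0 x y"
  by (cases x; cases y) (simp_all add: beta0_def)

lemma modeq: "((a::nat) mod 2 = b mod 2) \<longleftrightarrow> (even a \<longleftrightarrow> even b)"
  by (metis even_iff_mod_2_eq_zero odd_iff_mod_2_eq_one)

lemma mp_aux: "c \<le> (b::nat) \<Longrightarrow> b \<le> a \<Longrightarrow> (a mod 2 = b mod 2 \<and> b mod 2 = c mod 2) \<longleftrightarrow> even (a - b) \<and> even (b - c)"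
  by (simp add: modeq even_diff_nat not_less)

definition ind :: "int \<Rightarrow> int \<Rightarrow> nat" where
  "ind k g = (if g = k then 1 else 0)"

lemma card_E: "card {w :: cand list. length w = n \<and> ballot3 w \<and> matching_parity w} = SS beta0 n"
proof -
  have fin0: "finite (UNIV :: cand set)" by (simp add: UNIV_cand)
  let ?X = "{w :: cand list. length w = n \<and> ballot3 w}"
  have finX: "finite ?X"
    by (rule finite_subset[OF _ finite_lists_length_eq[OF fin0, of n]]) auto
  have mp: "matching_parity w \<longleftrightarrow> even (xa w) \<and> even (yb w)" if "ballot3 w" for w
  proof -
    have c: "cnt C w \<le> cnt B w" "cnt B w \<le> cnt A w" using ballot3_counts[OF that] by auto
    show ?thesis unfolding matching_parity_def xa_def yb_def by (rule mp_aux[OF c])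
  qed
  have "SS beta0 n = (\<Sum>w\<in>?X. if matching_parity w then 1 else 0)"
    unfolding SS_def beta0_def by (rule sum.cong[OF refl]) (simp add: mp)
  also have "\<dots> = (\<Sum>w\<in>{w \<in> ?X. matching_parity w}. 1)"
    by (rule sum.inter_filter[OF finX, symmetric])
  also have "\<dots> = card {w \<in> ?X. matching_parity w}"
    by (rule card_eq_sum[symmetric])
  also have "{w \<in> ?X. matching_parity w} = {w. length w = n \<and> ballot3 w \<and> matching_parity w}"
    by auto
  finally show ?thesis by (rule sym)
qed

lemma card_R: "riordan n = QQ (ind 0) n"
proof -
  have fin0: "finite (UNIV :: step set)" by (simp add: UNIV_step)
  let ?X = "{p :: step list. length p = n \<and> okp p}"
  have finX: "finite ?X"
    by (rule finite_subset[OF _ finite_lists_length_eq[OF fin0, of n]]) auto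
  have "QQ (ind 0) n = (\<Sum>p\<in>?X. if hgt p = 0 then 1 else 0)"
    unfolding QQ_def ind_def by simp
  also have "\<dots> = (\<Sum>p\<in>{p \<in> ?X. hgt p = 0}. 1)"
    by (rule sum.inter_filter[OF finX, symmetric])
  also have "\<dots> = card {p \<in> ?X. hgt p = 0}"
    by (rule card_eq_sum[symmetric])
  also have "{p \<in> ?X. hgt p = 0} = {p. length p = n \<and> riordan_path p}"
    by (auto simp: riordan_path_def okp_def hgt_def)
  finally show ?thesis by (simp add: riordan_def)
qed

lemma T_R: "SS (\<lambda>x y. 1) n = riordan n + riordan (Suc n)"
proof -
  have "SS (\<lambda>x y. 1) n = SS (alpha 0) n" by (rule SS_cong) (simp add: alpha_def)
  also have "\<dots> = QQ (psi 0) n" by (rule main_alpha)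
  also have "\<dots> = QQ (\<lambda>g. ind 0 g + ind 1 g) n" by (rule QQ_cong) (simp add: psi_def ind_def)
  also have "\<dots> = QQ (ind 0) n + QQ (ind 1) n" by (rule QQ_add)
  also have "QQ (ind 1) n = riordan (Suc n)"
    unfolding card_R QQ_Suc by (rule QQ_cong) (auto simp: ind_def)
  finally show ?thesis by (simp add: card_R)
qed

lemma E_step: "SS beta0 (Suc n) + SS beta0 n = SS (\<lambda>x y. 1) n"
proof -
  have "SS beta0 (Suc n) = SS (\<lambda>x y. 1 - beta0 x y) n"
    unfolding SS_Suc by (rule SS_cong) (rule beta0_step)
  then have "SS beta0 (Suc n) + SS beta0 n = SS (\<lambda>x y. (1 - beta0 x y) + beta0 x y) n"
    by (simp add: SS_add)
  also have "\<dots> = SS (\<lambda>x y. 1) n" by (rule SS_cong) (simp add: beta0_def)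
  finally show ?thesis .
qed

lemma E_eq_R: "SS beta0 n = riordan n"
proof (induction n)
  case 0
  have "riordan 0 = 1" by (simp add: card_R QQ_0 ind_def)
  then show ?case by (simp add: SS_0 beta0_def)
next
  case (Suc n)
  show ?case using E_step[of n] T_R[of n] Suc.IH by simp
qed

theorem theorem4p3:
  fixes n :: nat
  assumes "n \<ge> 1"
  shows "card {w :: cand list. length w = n \<and> ballot3 w \<and> matching_parity w} = riordan n"
  by (simp add: card_E E_eq_R)

end
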